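(* Let $t\in(0,1)$. For all $\eta$ sufficiently close to $t$, all $\theta\in\mathbb R/2\pi\mathbb Z$ and $z\in\mathbb H$, the function $P\mapsto|K_\eta(z,P)|$ has a unique maximum point on $\Sigma_{t,\theta}$.
   Context: $\mathbb H=\{x+iy:y>0\}$; $\mathbb H^{\mathbb C}=\mathbb C^2\ni P=(X(P),Y(P))$ with $\mathbb H$ embedded as real points; $Z=X+iY$, $\tilde Z=X-iY$; $\cosh\mathrm{dist}(x+iy,P):=1+\frac{(x-X)^2+(y-Y)^2}{2yY}$. For $\eta\in(0,1)$, $c_\eta=\frac4{4\eta-\eta^3}$ and $K_\eta(z,P)=\frac{z-\tilde Z(P)}{\bar z-Z(P)}e^{-c_\eta\cosh\mathrm{dist}(z,P)}$. $h_t(z,\theta)$: point at time $t$ of the unit-speed right horocycle (image of $t\mapsto -t+i$ under an orientation-preserving isometry) starting at $z=x+iy$ with velocity $y(\cos\theta\partial_x+\sin\theta\partial_y)$, continued holomorphically to complex $t$ with $|\Im t|<1$ as a point of $\mathbb C^2$. $\Sigma_{t,\theta}:=\{h_{-it}(z,\theta):z\in\mathbb H\}$. *)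

theory Defs
  imports "HOL-Analysis.Analysis"
begin

text \<open>Points of the complexified hyperbolic plane are pairs (X, Y) of complex numbers;
  a real point x + iy of the upper half plane corresponds to (x, y).\<close>

type_synonym cpoint = "complex \<times> complex"

definition Xc :: "cpoint \<Rightarrow> complex" where "Xc P = fst P"
definition Yc :: "cpoint \<Rightarrow> complex" where "Yc P = snd P"
definition Zc :: "cpoint \<Rightarrow> complex" where "Zc P = Xc P + \<i> * Yc P"
definition Ztc :: "cpoint \<Rightarrow> complex" where "Ztc P = Xc P - \<i> * Yc P"

definition upper_half :: "complex set" where "upper_half = {z. Im z > 0}"

definition cosh_dist :: "complex \<Rightarrow> cpoint \<Rightarrow> complex" where
  "cosh_dist z P = 1 + ((of_real (Re z) - Xc P)^2 + (of_real (Im z) - Yc P)^2)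
                       / (2 * of_real (Im z) * Yc P)"

definition c_eta :: "real \<Rightarrow> real" where "c_eta \<eta> = 4 / (4 * \<eta> - \<eta>^3)"

definition K_eta :: "real \<Rightarrow> complex \<Rightarrow> cpoint \<Rightarrow> complex" where
  "K_eta \<eta> z P = (z - Ztc P) / (cnj z - Zc P) * exp (- of_real (c_eta \<eta>) * cosh_dist z P)"

text \<open>Unit-speed right horocycle through z = x+iy with initial velocity
  y(cos th d_x + sin th d_y), i.e. the image of s |-> -s + i under the orientation-preserving
  isometry w |-> x + y k(w), k the rotation about i with k'(i) = -e^{i th}.
  Explicitly, for real s,
    X = x + y (s^2 sin th / 2 + s cos th) / D(s),  Y = y / D(s),
    D(s) = 1 - s sin th + s^2 (1 + cos th)/2.
  These are rational in s with no poles for |Im s| < 1, so the same formula gives the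
  holomorphic continuation to complex s with |Im s| < 1.\<close>
definition horo_D :: "complex \<Rightarrow> real \<Rightarrow> complex" where
  "horo_D s \<theta> = 1 - s * of_real (sin \<theta>) + s^2 * of_real ((1 + cos \<theta>) / 2)"

definition horo :: "complex \<Rightarrow> complex \<Rightarrow> real \<Rightarrow> cpoint" where
  "horo s z \<theta> =
     (of_real (Re z) + of_real (Im z) * (s^2 * of_real (sin \<theta> / 2) + s * of_real (cos \<theta>)) / horo_D s \<theta>,
      of_real (Im z) / horo_D s \<theta>)"

definition Sigma_set :: "real \<Rightarrow> real \<Rightarrow> cpoint set" where
  "Sigma_set t \<theta> = (\<lambda>z. horo (- \<i> * of_real t) z \<theta>) ` upper_half"

end

theory Submission
  imports Defs "HOL-Analysis.Analysis"
begin


definition psi :: "real \<Rightarrow> real \<Rightarrow> real \<Rightarrow> real" where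
  "psi t C E = ln (1 + 2*(1-t)*E) - ln (1 + 2*(1+t)*E) - C*((1-t)*(1+t)*E + 1/(4*E))"

definition gfun :: "real \<Rightarrow> real \<Rightarrow> real \<Rightarrow> real" where
  "gfun t C E = C*(1 - 4*(1-t)*(1+t)*E^2) - 16*t*E^2/((1+2*(1-t)*E)*(1+2*(1+t)*E))"

lemma psi_deriv:
  assumes "0 < t" "t < 1" "E > 0"
  shows "DERIV (psi t C) E :> gfun t C E / (4*E^2)"
proof -
  have p1: "1 + 2*(1-t)*E > 0" using assms by (simp add: add_pos_nonneg)
  have p2: "1 + 2*(1+t)*E > 0" using assms by (simp add: add_pos_nonneg)
  have d1: "DERIV (\<lambda>E. ln (1 + 2*(1-t)*E)) E :> (2*(1-t))/(1 + 2*(1-t)*E)"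
    using p1 by (auto intro!: derivative_eq_intros)
  have d2: "DERIV (\<lambda>E. ln (1 + 2*(1+t)*E)) E :> (2*(1+t))/(1 + 2*(1+t)*E)"
    using p2 by (auto intro!: derivative_eq_intros)
  have d3: "DERIV (\<lambda>E. C*((1-t)*(1+t)*E + 1/(4*E))) E :> C*((1-t)*(1+t) - 4/(4*E)^2)"
    using assms by (auto intro!: derivative_eq_intros simp: power2_eq_square)
  have "DERIV (psi t C) E :> (2*(1-t))/(1 + 2*(1-t)*E) - (2*(1+t))/(1 + 2*(1+t)*E)
          - C*((1-t)*(1+t) - 4/(4*E)^2)"
    unfolding psi_def by (intro DERIV_diff d1 d2 d3)
  moreover have "(2*(1-t))/(1 + 2*(1-t)*E) - (2*(1+t))/(1 + 2*(1+t)*E)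
          - C*((1-t)*(1+t) - 4/(4*E)^2) = gfun t C E / (4*E^2)"
    unfolding gfun_def using p1 p2 assms
    by (simp add: field_simps power2_eq_square)
  ultimately show ?thesis by simp
qed

lemma gfun_mono:
  assumes "0 < t" "t < 1" "C > 0" "0 \<le> x" "x < y"
  shows "gfun t C y < gfun t C x"
proof -
  have a: "0 < 1 - t" using assms by simp
  have d: "\<And>z. 0 \<le> z \<Longrightarrow> (1+2*(1-t)*z)*(1+2*(1+t)*z) = 1 + 4*z + 4*(1-t)*(1+t)*z^2"
    by (simp add: algebra_simps power2_eq_square)
  define k where "k = (1-t)*(1+t)"
  have k: "k > 0" using assms unfolding k_def by simp
  have q: "x^2/(1 + 4*x + 4*k*x^2) < y^2/(1 + 4*y + 4*k*y^2)"
  proof -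
    have px: "1 + 4*x + 4*k*x^2 > 0" using assms k by (simp add: add_pos_nonneg)
    have py: "1 + 4*y + 4*k*y^2 > 0" using assms k by (simp add: add_pos_nonneg)
    have "x^2*(1 + 4*y + 4*k*y^2) < y^2*(1 + 4*x + 4*k*x^2)"
    proof -
      have "x^2 < y^2" using assms by (simp add: power_strict_mono)
      moreover have "x*(x*y) \<le> y*(x*y)" using assms by (intro mult_right_mono) auto
      then have "x^2*y \<le> y^2*x" by (simp add: power2_eq_square mult_ac)
      ultimately show ?thesis by (simp add: algebra_simps)
    qed
    then show ?thesis using px py by (simp add: divide_simps)
  qed
  have m1: "C*(1 - 4*k*y^2) \<le> C*(1 - 4*k*x^2)"
    using assms k by (intro mult_left_mono) (auto intro!: mult_left_mono power_mono)
  have m2: "16*t*(x^2/(1 + 4*x + 4*k*x^2)) < 16*t*(y^2/(1 + 4*y + 4*k*y^2))"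
    using mult_strict_left_mono[OF q, of "16*t"] assms by simp
  have ge: "\<And>z. 0 \<le> z \<Longrightarrow> gfun t C z = C*(1 - 4*k*z^2) - 16*t*(z^2/(1 + 4*z + 4*k*z^2))"
    unfolding gfun_def using d unfolding k_def by (simp add: algebra_simps)
  show ?thesis using m1 m2 ge[of x] ge[of y] assms by linarith
qed

lemma psi_cont: assumes "0 < t" "t < 1" "0 < a" shows "continuous_on {a..b} (psi t C)"
proof (rule continuous_at_imp_continuous_on, intro ballI)
  fix x assume "x \<in> {a..b}"
  then have "x > 0" using assms by auto
  then show "isCont (psi t C) x" using psi_deriv[OF assms(1,2)] by (blast intro: DERIV_isCont)
qed

lemma psi_max:
  assumes "0 < t" "t < 1" "C > 0"
  shows "\<exists>es>0. \<forall>E>0. E \<noteq> es \<longrightarrow> psi t C E < psi t C es"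
proof -
  define E2 where "E2 = 1/(1-t)"
  have E2: "E2 > 0" using assms unfolding E2_def by simp
  have g0: "gfun t C 0 = C" unfolding gfun_def by simp
  have g1: "gfun t C E2 < 0"
  proof -
    have h1: "(1-t)*E2 = 1" using assms unfolding E2_def by simp
    have h2: "E2 \<ge> 1" using assms unfolding E2_def by simp
    have "4*(1-t)*(1+t)*E2^2 = 4*(1+t)*E2*((1-t)*E2)" by (simp add: power2_eq_square) (simp add: algebra_simps)
    also have "\<dots> = 4*(1+t)*E2" using h1 by simp
    finally have e1: "4*(1-t)*(1+t)*E2^2 = 4*(1+t)*E2" .
    have A: "(4+4*t)*E2 \<ge> (4+4*t)*1" using h2 assms by (intro mult_left_mono) auto
    have "(4+4*t)*E2 > 1" using A assms by (smt (verit))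
    then have "4*(1+t)*E2 > 1" by (simp add: algebra_simps)
    then have "4*(1-t)*(1+t)*E2^2 > 1" using e1 by simp
    then have "C*(1 - 4*(1-t)*(1+t)*E2^2) < 0" using assms by (simp add: mult_pos_neg)
    moreover have "16*t*E2^2/((1+2*(1-t)*E2)*(1+2*(1+t)*E2)) \<ge> 0"
      using assms E2 by (intro divide_nonneg_pos mult_pos_pos) (auto intro: add_pos_nonneg)
    ultimately show ?thesis unfolding gfun_def by linarith
  qed
  have gc: "continuous_on {0..E2} (gfun t C)"
  proof -
    have "\<And>x. x \<in> {0..E2} \<Longrightarrow> (1+2*(1-t)*x)*(1+2*(1+t)*x) \<noteq> 0"
    proof -
      fix x :: real assume "x \<in> {0..E2}"
      then have "x \<ge> 0" by simp
      then have "1+2*(1-t)*x > 0" "1+2*(1+t)*x > 0" using assms by (auto intro!: add_pos_nonneg)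
      then show "(1+2*(1-t)*x)*(1+2*(1+t)*x) \<noteq> 0" by simp
    qed
    then show ?thesis unfolding gfun_def by (intro continuous_intros) auto
  qed
  obtain es where es: "0 \<le> es" "es \<le> E2" "gfun t C es = 0"
    using IVT2'[where f="gfun t C" and a=0 and b=E2 and y=0] g1 g0 gc E2 assms by auto
  have esp: "es > 0" using es g0 assms by (cases "es = 0") auto
  show ?thesis
  proof (intro exI[of _ es] conjI allI impI esp)
    fix E assume E: "E > 0" "E \<noteq> es"
    show "psi t C E < psi t C es"
    proof (cases "E < es")
      case True
      show ?thesis
      proof (rule DERIV_pos_imp_increasing_open[OF True])
        fix x assume x: "E < x" "x < es"
        have "gfun t C x > 0" using gfun_mono[of t C x es] x E assms es by auto
        then show "\<exists>y. DERIV (psi t C) x :> y \<and> y > 0"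
          using psi_deriv[of t x C] x E assms by (intro exI[of _ "gfun t C x / (4*x^2)"] conjI) (auto intro!: divide_pos_pos)
      qed (use psi_cont assms E in auto)
    next
      case False
      then have F: "es < E" using E by auto
      show ?thesis
      proof (rule DERIV_neg_imp_decreasing_open[OF F])
        fix x assume x: "es < x" "x < E"
        have "gfun t C x < 0" using gfun_mono[of t C es x] x E assms es by auto
        then show "\<exists>y. DERIV (psi t C) x :> y \<and> y < 0"
          using psi_deriv[of t x C] x esp assms by (intro exI[of _ "gfun t C x / (4*x^2)"] conjI) (auto intro!: divide_neg_pos)
      qed (use psi_cont assms esp in auto)
    qed
  qed
qed

definition Phi :: "real \<Rightarrow> real \<Rightarrow> real \<Rightarrow> real \<Rightarrow> real" where
  "Phi t C e e' = (ln ((1-t)^2*e + e' + (1-t)) - ln ((1+t)^2*e + e' + (1+t)))/2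
     - C*((1-t)*(1+t)*e + e')"

lemma Phi_psi:
  assumes "0 < t" "t < 1" "E > 0"
  shows "Phi t C E (1/(4*E)) = psi t C E"
proof -
  have ka: "\<And>k::real. k \<ge> 0 \<Longrightarrow> k^2*E + 1/(4*E) + k = (1+2*k*E)^2/(4*E)"
    using assms by (simp add: field_simps power2_eq_square)
  have la: "\<And>k::real. k \<ge> 0 \<Longrightarrow> ln ((1+2*k*E)^2/(4*E)) = 2*ln(1+2*k*E) - ln (4*E)"
  proof -
    fix k :: real assume k: "k \<ge> 0"
    have p: "1+2*k*E > 0" using k assms by (simp add: add_pos_nonneg)
    have "ln ((1+2*k*E)^2/(4*E)) = ln ((1+2*k*E)^2) - ln (4*E)"
      using p assms by (simp add: ln_div)
    moreover have "ln ((1+2*k*E)^2) = 2*ln(1+2*k*E)" using p by (simp add: ln_realpow)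
    ultimately show "ln ((1+2*k*E)^2/(4*E)) = 2*ln(1+2*k*E) - ln (4*E)" by simp
  qed
  have "(1-t) \<ge> 0" "(1+t) \<ge> 0" using assms by auto
  then show ?thesis unfolding Phi_def psi_def
    using ka[of "1-t"] ka[of "1+t"] la[of "1-t"] la[of "1+t"] by simp
qed

lemma prod_ge_one:
  fixes t E E' :: real
  assumes "0 < t" "t < 1" "E > 0" "E' > 0" "4*E*E' = 1"
  shows "((1-t)^2*E + E' + (1-t)) * ((1+t)^2*E + E' + (1+t)) \<ge> 1"
proof -
  define a where "a = 1 - t"
  define b where "b = 1 + t"
  have ab: "a > 0" "b > 0" "a + b = 2" using assms unfolding a_def b_def by auto
  have EE: "E*E' = 1/4" using assms(5) by simp
  have "(a^2*E + E' + a) * (b^2*E + E' + b) = a^2*b^2*E^2 + a^2*b*E + E'^2 + E'*b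
        + a*b^2*E + a*E' + ((a^2+b^2)*(E*E') + a*b)"
    by (simp add: algebra_simps power2_eq_square)
  also have "\<dots> = a^2*b^2*E^2 + a^2*b*E + E'^2 + E'*b + a*b^2*E + a*E' + ((a^2+b^2)/4 + a*b)"
    unfolding EE by simp
  finally have eq: "(a^2*E + E' + a) * (b^2*E + E' + b) = a^2*b^2*E^2 + a^2*b*E + E'^2 + E'*b + a*b^2*E + a*E' + ((a^2+b^2)/4 + a*b)" .
  have s1: "(a+b)^2 = a^2+b^2+2*a*b" by (simp add: power2_sum)
  have s2: "(a+b)^2 = 4" using ab(3) by simp
  have abp: "a*b > 0" using ab by simp
  have s3: "a^2+b^2 = 4 - 2*(a*b)" using s1 s2 by (simp add: algebra_simps)
  have c1: "(a^2+b^2)/4 + a*b \<ge> 1" unfolding s3 using abp by (auto simp: field_simps)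
  have "a^2*b^2*E^2 + a^2*b*E + E'^2 + E'*b + a*b^2*E + a*E' \<ge> 0"
    using ab assms by (intro add_nonneg_nonneg) auto
  then show ?thesis using eq c1 unfolding a_def b_def by linarith
qed

lemma Phi_boundary:
  fixes t C e e' :: real
  assumes "0 < t" "t < 1" "C > t" "e > 0" "e' > 0" "4*e*e' \<ge> 1"
  shows "\<exists>E>0. Phi t C e e' \<le> psi t C E \<and> (4*e*e' > 1 \<longrightarrow> Phi t C e e' < psi t C E)"
proof -
  define lm where "lm = 1/(2* sqrt(e*e'))"
  have sq: "sqrt(e*e') \<ge> 1/2"
  proof -
    have "sqrt(e*e') \<ge> sqrt(1/4)" using assms by (intro real_sqrt_le_mono) simp
    moreover have "sqrt (1/4::real) = 1/2" by (simp add: real_sqrt_divide)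
    ultimately show ?thesis by simp
  qed
  have lpos: "lm > 0" unfolding lm_def using sq assms by simp
  have l1: "lm \<le> 1" unfolding lm_def using sq assms by (auto simp: divide_le_eq)
  have l2: "lm^2 * (4*e*e') = 1" unfolding lm_def using assms sq
    by (simp add: power2_eq_square field_simps)
  have lstrict: "4*e*e' > 1 \<Longrightarrow> lm < 1"
  proof -
    assume h: "4*e*e' > 1"
    have "lm^2 < 1" using l2 h lpos by (smt (verit) mult_less_cancel_left1 power2_eq_square zero_less_mult_iff)
    then show "lm < 1" using power_less_imp_less_base[of lm 2 1] by simp
  qed
  define E where "E = lm*e"
  define E' where "E' = lm*e'"
  have Epos: "E > 0" "E' > 0" unfolding E_def E'_def using lpos assms by auto
  have EE: "4*E*E' = 1" unfolding E_def E'_def using l2 by (simp add: power2_eq_square algebra_simps)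
  have E'eq: "E' = 1/(4*E)" using EE Epos by (simp add: field_simps)
  define a where "a = 1 - t"
  define b where "b = 1 + t"
  have ab: "a > 0" "b > 0" using assms unfolding a_def b_def by auto
  define n1 where "n1 = a^2*e + e' + a"
  define n2 where "n2 = b^2*e + e' + b"
  define m1 where "m1 = a^2*E + E' + a"
  define m2 where "m2 = b^2*E + E' + b"
  have pos: "n1 > 0" "n2 > 0" "m1 > 0" "m2 > 0"
    unfolding n1_def n2_def m1_def m2_def using ab assms Epos by (auto intro!: add_pos_pos add_nonneg_pos)
  have m12: "m1 * m2 \<ge> 1" unfolding m1_def m2_def a_def b_def using prod_ge_one[OF assms(1,2) Epos EE] .
  have n2m2: "n2 \<ge> m2" unfolding n2_def m2_def E_def E'_def using l1 assms ab
    by (auto intro!: add_mono mult_left_mono simp: mult_le_cancel_right1)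
  have m1n2: "m1 * n2 \<ge> 1" using m12 n2m2 pos by (smt (verit) mult_left_mono)
  have key: "n1*m2 - m1*n2 = (1-lm)*(2*t*(e' - a*b*e))"
    unfolding n1_def n2_def m1_def m2_def E_def E'_def a_def b_def by (simp add: algebra_simps power2_eq_square)
  define h1 where "h1 = a*b*e + e'"
  have h1pos: "h1 > 0" unfolding h1_def using ab assms by (auto intro!: add_nonneg_pos)
  have lnineq: "ln n1 - ln m1 - (ln n2 - ln m2) \<le> (n1*m2 - m1*n2)/(m1*n2)"
  proof -
    have "ln n1 - ln m1 - (ln n2 - ln m2) = ln ((n1*m2)/(m1*n2))"
      using pos by (simp add: ln_div ln_mult)
    also have "\<dots> \<le> (n1*m2)/(m1*n2) - 1" using pos by (intro ln_le_minus_one) simp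
    also have "\<dots> = (n1*m2 - m1*n2)/(m1*n2)" using pos by (simp add: field_simps)
    finally show ?thesis .
  qed
  have b2: "(n1*m2 - m1*n2)/(m1*n2) \<le> (1-lm)*(2*t*h1)"
  proof -
    have nn: "(1-lm)*(2*t*(e' - a*b*e)) \<le> (1-lm)*(2*t*h1)"
      unfolding h1_def using l1 assms ab by (intro mult_left_mono) auto
    have "(1-lm)*(2*t*h1) \<ge> 0" using l1 assms h1pos by auto
    then have "(1-lm)*(2*t*h1)/(m1*n2) \<le> (1-lm)*(2*t*h1)"
      using m1n2 by (simp add: divide_le_eq mult_le_cancel_left1)
    moreover have "(n1*m2 - m1*n2)/(m1*n2) \<le> (1-lm)*(2*t*h1)/(m1*n2)"
      using key nn pos by (intro divide_right_mono) auto
    ultimately show ?thesis by linarith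
  qed
  have P1: "Phi t C e e' = (ln n1 - ln n2)/2 - C*h1"
    unfolding Phi_def n1_def n2_def h1_def a_def b_def by simp
  have P2: "Phi t C E E' = (ln m1 - ln m2)/2 - C*(lm*h1)"
    unfolding Phi_def m1_def m2_def h1_def a_def b_def E_def E'_def by (simp add: algebra_simps)
  have diff: "Phi t C e e' - Phi t C E E' = (ln n1 - ln m1 - (ln n2 - ln m2))/2 - C*(1-lm)*h1"
    unfolding P1 P2 by (simp add: field_simps)
  have main: "Phi t C e e' - Phi t C E E' \<le> (1-lm)*h1*(t - C)"
  proof -
    have x1: "ln n1 - ln m1 - (ln n2 - ln m2) \<le> (1-lm)*(2*t*h1)" using lnineq b2 by linarith
    have x2: "(ln n1 - ln m1 - (ln n2 - ln m2))/2 \<le> (1-lm)*t*h1" using x1 by simp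
    have x3: "(1-lm)*h1*(t - C) = (1-lm)*t*h1 - C*(1-lm)*h1" by (simp add: algebra_simps)
    show ?thesis using diff x2 x3 by linarith
  qed
  have PE: "Phi t C E E' = psi t C E" using Phi_psi[OF assms(1,2) Epos(1)] E'eq by simp
  show ?thesis
  proof (intro exI[of _ E] conjI impI Epos)
    have "(1-lm)*h1*(t - C) \<le> 0" using l1 h1pos assms by (intro mult_nonneg_nonpos) auto
    then show "Phi t C e e' \<le> psi t C E" using main PE by linarith
  next
    assume "4*e*e' > 1"
    then have "lm < 1" by (rule lstrict)
    then have "(1-lm)*h1*(t - C) < 0" using h1pos assms by (intro mult_pos_neg) auto
    then show "Phi t C e e' < psi t C E" using main PE by linarith
  qed
qed



definition xiF :: "real \<Rightarrow> complex \<Rightarrow> complex \<Rightarrow> real" where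
  "xiF \<theta> z0 w = (Re w - Re z0) * cos (\<theta>/2) + Im w * sin (\<theta>/2)"
definition zeF :: "real \<Rightarrow> complex \<Rightarrow> complex \<Rightarrow> real" where
  "zeF \<theta> z0 w = - (Re w - Re z0) * sin (\<theta>/2) + Im w * cos (\<theta>/2)"
definition eeF :: "real \<Rightarrow> complex \<Rightarrow> complex \<Rightarrow> real" where
  "eeF \<theta> z0 w = ((xiF \<theta> z0 w)^2 + (cos (\<theta>/2))^2 * (Im z0)^2) / (2 * Im w * Im z0)"
definition ee2F :: "real \<Rightarrow> complex \<Rightarrow> complex \<Rightarrow> real" where
  "ee2F \<theta> z0 w = ((zeF \<theta> z0 w)^2 + (sin (\<theta>/2))^2 * (Im z0)^2) / (2 * Im w * Im z0)"
definition kap :: "real \<Rightarrow> real \<Rightarrow> real" where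
  "kap t \<theta> = sqrt (((1+t)^2 * (cos (\<theta>/2))^2 + (sin (\<theta>/2))^2) / ((1-t)^2 * (cos (\<theta>/2))^2 + (sin (\<theta>/2))^2))"

lemma K_formula:
  fixes t \<eta> \<theta> :: real and z0 w :: complex
  assumes t: "0 < t" "t < 1" and z0: "Im z0 > 0" and w: "Im w > 0"
  shows "norm (K_eta \<eta> z0 (horo (- \<i> * of_real t) w \<theta>)) =
         kap t \<theta> * exp (Phi t (c_eta \<eta>) (eeF \<theta> z0 w) (ee2F \<theta> z0 w))"
proof -
  define x where "x = Re w"
  define y where "y = Im w"
  define x0 where "x0 = Re z0"
  define y0 where "y0 = Im z0"
  define hc where "hc = cos (\<theta>/2)"
  define hs where "hs = sin (\<theta>/2)"
  define C where "C = c_eta \<eta>"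
  have yp: "y > 0" "y0 > 0" using w z0 unfolding y_def y0_def by auto
  have cs1: "hc^2 + hs^2 = 1" unfolding hc_def hs_def by simp
  have cth: "cos \<theta> = hc^2 - hs^2"
    unfolding hc_def hs_def using cos_double[of "\<theta>/2"] by simp
  have sth: "sin \<theta> = 2*hs*hc"
    unfolding hc_def hs_def using sin_double[of "\<theta>/2"] by (simp add: mult_ac)
  define D where "D = horo_D (- \<i> * of_real t) \<theta>"
  define A where "A = (- \<i> * of_real t)^2 * of_real (sin \<theta> / 2) + (- \<i> * of_real t) * of_real (cos \<theta>)"
  define E where "E = Complex (1 - t^2*hs^2) (- (2*t*hs*hc))"
  have Dc: "D = Complex (1 - t^2*hc^2) (2*t*hs*hc)"
  proof -
    have "(1 + cos \<theta>)/2 = hc^2" using cth cs1 by simp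
    then show ?thesis unfolding D_def horo_D_def
      by (simp add: complex_eq_iff sth power2_eq_square algebra_simps)
  qed
  have Ac: "A = Complex (- (t^2*hs*hc)) (- (t*(hc^2-hs^2)))"
    unfolding A_def by (simp add: complex_eq_iff sth cth power2_eq_square algebra_simps)
  have ReD: "Re D > 0"
  proof -
    have "hc^2 \<le> 1" using cs1 zero_le_power2[of hs] by linarith
    moreover have "t^2 < 1" using t by (simp add: power_less_one_iff abs_less_iff) 
    ultimately have "t^2*hc^2 < 1" using mult_left_le[of "hc^2" "t^2"] by simp
    then show ?thesis unfolding Dc by simp
  qed
  have Dnz: "D \<noteq> 0" using ReD by auto
  have AE: "A^2 + 1 = D * E"
  proof -
    have r: "(- (t^2*hs*hc))^2 - (- (t*(hc^2-hs^2)))^2 + 1 = (1 - t^2*hc^2)*(1 - t^2*hs^2) - (2*t*hs*hc)*(- (2*t*hs*hc))"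
      using cs1 by algebra
    have i: "2*(- (t^2*hs*hc))*(- (t*(hc^2-hs^2))) = (1 - t^2*hc^2)*(- (2*t*hs*hc)) + (2*t*hs*hc)*(1 - t^2*hs^2)"
      by (simp add: power2_eq_square algebra_simps)
    show ?thesis unfolding Ac Dc E_def
      apply (simp add: complex_eq_iff power2_eq_square)
      apply (intro conjI)
      using r apply (simp add: power2_eq_square algebra_simps)
      using i by (simp add: power2_eq_square algebra_simps)
  qed
  have z0c: "z0 = Complex x0 y0" unfolding x0_def y0_def by simp
  define P where "P = horo (- \<i> * of_real t) w \<theta>"
  have XP: "Xc P = of_real x + of_real y * A / D"
    unfolding P_def horo_def Xc_def A_def D_def x_def y_def by simp
  have YP: "Yc P = of_real y / D"
    unfolding P_def horo_def Yc_def D_def y_def by simp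
  have XD: "Xc P * D = of_real x * D + of_real y * A" unfolding XP using Dnz by (simp add: field_simps)
  have YD: "Yc P * D = of_real y" unfolding YP using Dnz by simp
  define N where "N = (z0 - of_real x) * D - of_real y * A + \<i> * of_real y"
  define M where "M = (cnj z0 - of_real x) * D - of_real y * A - \<i> * of_real y"
  have numeq: "z0 - Ztc P = N / D"
    unfolding Ztc_def N_def using Dnz XD YD by (simp add: field_simps)
  have deneq: "cnj z0 - Zc P = M / D"
    unfolding Zc_def M_def using Dnz XD YD by (simp add: field_simps)
  have ratio: "(z0 - Ztc P)/(cnj z0 - Zc P) = N / M"
    unfolding numeq deneq using Dnz by simp
  define xi where "xi = (x - x0)*hc + y*hs"
  define ze where "ze = - (x - x0)*hs + y*hc"
  define F1 where "F1 = xi^2 + hc^2*y0^2"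
  define F2 where "F2 = ze^2 + hs^2*y0^2"
  define Q1 where "Q1 = (1-t)^2*F1 + F2 + 2*(1-t)*y*y0"
  define Q2 where "Q2 = (1+t)^2*F1 + F2 + 2*(1+t)*y*y0"
  define q2 where "q2 = (1+t)^2*hc^2 + hs^2"
  define p2 where "p2 = (1-t)^2*hc^2 + hs^2"
  have ReN: "Re N = (1-t^2*hc^2)*(x0 - x) - 2*t*hs*hc*y0 + t^2*hs*hc*y"
    unfolding N_def Dc Ac z0c by (simp add: algebra_simps)
  have ImN: "Im N = (1-t^2*hc^2)*y0 + 2*t*hs*hc*(x0-x) + y*(1 + t*(hc^2-hs^2))"
    unfolding N_def Dc Ac z0c by (simp add: algebra_simps)
  have ReM: "Re M = (1-t^2*hc^2)*(x0 - x) + 2*t*hs*hc*y0 + t^2*hs*hc*y"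
    unfolding M_def Dc Ac z0c by (simp add: algebra_simps)
  have ImM: "Im M = - (1-t^2*hc^2)*y0 + 2*t*hs*hc*(x0-x) + y*(t*(hc^2-hs^2) - 1)"
    unfolding M_def Dc Ac z0c by (simp add: algebra_simps)
  have N2: "(cmod N)^2 = q2 * Q1"
  proof -
    have "(cmod N)^2 = (Re N)^2 + (Im N)^2" by (simp add: cmod_power2)
    also have "\<dots> = q2 * Q1" unfolding ReN ImN q2_def Q1_def F1_def F2_def xi_def ze_def
      using cs1 by algebra
    finally show ?thesis .
  qed
  have M2: "(cmod M)^2 = p2 * Q2"
  proof -
    have "(cmod M)^2 = (Re M)^2 + (Im M)^2" by (simp add: cmod_power2)
    also have "\<dots> = p2 * Q2" unfolding ReM ImM p2_def Q2_def F1_def F2_def xi_def ze_def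
      using cs1 by algebra
    finally show ?thesis .
  qed
  have hcs: "hc^2 \<le> 1" "hs^2 \<le> 1" using cs1 zero_le_power2[of hs] zero_le_power2[of hc] by linarith+
  have p2pos: "p2 > 0"
  proof (cases "hc = 0")
    case True then have "hs^2 = 1" using cs1 by simp
    then show ?thesis unfolding p2_def using True by simp
  next
    case False then have "(1-t)^2*hc^2 > 0" using t by simp
    then show ?thesis unfolding p2_def by (simp add: add_pos_nonneg)
  qed
  have q2pos: "q2 > 0"
  proof (cases "hc = 0")
    case True then have "hs^2 = 1" using cs1 by simp
    then show ?thesis unfolding q2_def using True by simp
  next
    case False then have "(1+t)^2*hc^2 > 0" using t by simp
    then show ?thesis unfolding q2_def by (simp add: add_pos_nonneg)
  qed
  have yy: "y*y0 > 0" using yp by simp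
  have k1: "2*(1-t)*y*y0 > 0" "2*(1+t)*y*y0 > 0" using t yp by (auto intro!: mult_pos_pos)
  have Q1pos: "Q1 > 0" unfolding Q1_def F1_def F2_def using k1
    by (intro add_nonneg_pos add_nonneg_nonneg) auto
  have Q2pos: "Q2 > 0" unfolding Q2_def F1_def F2_def using k1
    by (intro add_nonneg_pos add_nonneg_nonneg) auto
  define e1 where "e1 = eeF \<theta> z0 w"
  define e2 where "e2 = ee2F \<theta> z0 w"
  have e1eq: "e1 = F1 / (2*y*y0)" unfolding e1_def eeF_def F1_def xi_def xiF_def x_def y_def x0_def y0_def hc_def hs_def by simp
  have e2eq: "e2 = F2 / (2*y*y0)" unfolding e2_def ee2F_def F2_def ze_def zeF_def x_def y_def x0_def y0_def hc_def hs_def by simp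
  define n1 where "n1 = (1-t)^2*e1 + e2 + (1-t)"
  define n2 where "n2 = (1+t)^2*e1 + e2 + (1+t)"
  have Qn1: "Q1 = 2*y*y0*n1" unfolding Q1_def n1_def e1eq e2eq using yp by (simp add: field_simps)
  have Qn2: "Q2 = 2*y*y0*n2" unfolding Q2_def n2_def e1eq e2eq using yp by (simp add: field_simps)
  have n1pos: "n1 > 0"
    by (rule zero_less_mult_pos[of "2*y*y0"]) (use Q1pos Qn1 yp in simp_all)
  have n2pos: "n2 > 0"
    by (rule zero_less_mult_pos[of "2*y*y0"]) (use Q2pos Qn2 yp in simp_all)
  have normratio: "cmod (N / M) = kap t \<theta> * sqrt (n1 / n2)"
  proof -
    have "cmod N = sqrt (q2 * Q1)" using N2 by (metis norm_ge_zero real_sqrt_unique)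
    moreover have "cmod M = sqrt (p2 * Q2)" using M2 by (metis norm_ge_zero real_sqrt_unique)
    ultimately have "cmod (N / M) = sqrt (q2 * Q1) / sqrt (p2 * Q2)" by (simp add: norm_divide)
    also have "\<dots> = sqrt ((q2/p2) * (Q1/Q2))" by (simp add: real_sqrt_divide real_sqrt_mult)
    also have "Q1/Q2 = n1/n2" unfolding Qn1 Qn2 using yp by simp
    also have "sqrt ((q2/p2) * (n1/n2)) = kap t \<theta> * sqrt (n1/n2)"
    proof -
      have "kap t \<theta> = sqrt (q2/p2)" unfolding kap_def q2_def p2_def hc_def hs_def ..
      then show ?thesis by (simp only: real_sqrt_mult)
    qed
    finally show ?thesis .
  qed
  define G where "G = D*((of_real x0 - of_real x)^2 + (of_real y0)^2) - 2*(of_real x0 - of_real x)* of_real y*A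
     - 2* of_real y0* of_real y + (of_real y)^2 * E"
  have GD: "D^2 * ((of_real x0 - Xc P)^2 + (of_real y0 - Yc P)^2) = D * G"
    using XD YD AE unfolding G_def by algebra
  have GD2: "(of_real x0 - Xc P)^2 + (of_real y0 - Yc P)^2 = G / D"
  proof -
    define S where "S = (of_real x0 - Xc P)^2 + (of_real y0 - Yc P)^2"
    have "D * (D * S) = D * G" using GD unfolding S_def by (simp add: power2_eq_square mult.assoc)
    then have "D * S = G" using Dnz by simp
    then have "S = G / D" using Dnz by (simp add: eq_divide_eq mult.commute)
    then show ?thesis unfolding S_def .
  qed
  have cdeq: "cosh_dist z0 P = 1 + G / of_real (2*y0*y)"
  proof -
    have "cosh_dist z0 P = 1 + (G / D) / (2 * of_real y0 * (of_real y / D))"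
      unfolding cosh_dist_def x0_def[symmetric] y0_def[symmetric] GD2[symmetric] YP ..
    also have "\<dots> = 1 + G / of_real (2*y0*y)" using Dnz by (simp add: field_simps)
    finally show ?thesis .
  qed
  have ReG: "Re G = (1 - t^2*hc^2)*((x0-x)^2+y0^2) + 2*(x0-x)*y*(t^2*hs*hc) - 2*y0*y + y^2*(1 - t^2*hs^2)"
    unfolding G_def Dc Ac E_def by (simp add: power2_eq_square algebra_simps)
  have ReG2: "2*y*y0 + Re G = (1-t)*(1+t)*F1 + F2"
    unfolding ReG F1_def F2_def xi_def ze_def using cs1 by algebra
  have Recd: "Re (cosh_dist z0 P) = (1-t)*(1+t)*e1 + e2"
  proof -
    have "Re (cosh_dist z0 P) = 1 + Re G / (2*y0*y)" unfolding cdeq by (simp add: Re_divide_of_real)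
    also have "\<dots> = (2*y*y0 + Re G) / (2*y*y0)" using yp by (simp add: field_simps)
    also have "\<dots> = (1-t)*(1+t)*e1 + e2" unfolding ReG2 e1eq e2eq using yp by (simp add: field_simps)
    finally show ?thesis .
  qed
  have sq: "sqrt (n1/n2) = exp ((ln n1 - ln n2)/2)"
  proof -
    have "(exp ((ln n1 - ln n2)/2))^2 = exp (ln n1 - ln n2)"
      by (simp add: power2_eq_square exp_add[symmetric])
    also have "\<dots> = n1/n2" using n1pos n2pos by (simp add: exp_diff)
    finally have "(exp ((ln n1 - ln n2)/2))^2 = n1/n2" .
    then show ?thesis by (metis exp_ge_zero real_sqrt_unique)
  qed
  have "norm (K_eta \<eta> z0 P) = cmod (N / M) * exp (- C * Re (cosh_dist z0 P))"
    unfolding K_eta_def ratio C_def norm_mult norm_exp_eq_Re by simp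
  also have "\<dots> = kap t \<theta> * exp ((ln n1 - ln n2)/2) * exp (- C * ((1-t)*(1+t)*e1 + e2))"
    unfolding normratio Recd sq ..
  also have "\<dots> = kap t \<theta> * exp (Phi t C e1 e2)"
    unfolding Phi_def n1_def[symmetric] n2_def[symmetric] by (simp add: exp_diff exp_add[symmetric] mult.assoc)
  finally show ?thesis unfolding P_def C_def e1_def e2_def .
qed


lemma ee_props:
  fixes \<theta> :: real and z0 w :: complex
  assumes z0: "Im z0 > 0" and w: "Im w > 0"
  shows "eeF \<theta> z0 w > 0" "ee2F \<theta> z0 w > 0" "4 * eeF \<theta> z0 w * ee2F \<theta> z0 w \<ge> 1"
proof -
  define x where "x = Re w"
  define y where "y = Im w"
  define x0 where "x0 = Re z0"
  define y0 where "y0 = Im z0"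
  define hc where "hc = cos (\<theta>/2)"
  define hs where "hs = sin (\<theta>/2)"
  have yp: "y > 0" "y0 > 0" using w z0 unfolding y_def y0_def by auto
  have cs1: "hc^2 + hs^2 = 1" unfolding hc_def hs_def by simp
  define xi where "xi = (x - x0)*hc + y*hs"
  define ze where "ze = - (x - x0)*hs + y*hc"
  define F1 where "F1 = xi^2 + hc^2*y0^2"
  define F2 where "F2 = ze^2 + hs^2*y0^2"
  have e1: "eeF \<theta> z0 w = F1 / (2*y*y0)" unfolding eeF_def F1_def xi_def xiF_def x_def y_def x0_def y0_def hc_def hs_def by simp
  have e2: "ee2F \<theta> z0 w = F2 / (2*y*y0)" unfolding ee2F_def F2_def ze_def zeF_def x_def y_def x0_def y0_def hc_def hs_def by simp
  have lag: "F1 * F2 = (y*y0)^2 + (xi*ze - hc*hs*y0^2)^2"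
    unfolding F1_def F2_def xi_def ze_def using cs1 by algebra
  have ge: "F1 * F2 \<ge> (y*y0)^2" using lag by simp
  have yy: "(y*y0)^2 > 0" using yp by simp
  have F1nn: "F1 \<ge> 0" "F2 \<ge> 0" unfolding F1_def F2_def by simp_all
  have F1p: "F1 > 0"
  proof (rule ccontr)
    assume "\<not> F1 > 0" then have "F1 = 0" using F1nn by simp
    then show False using ge yy by simp
  qed
  have F2p: "F2 > 0"
  proof (rule ccontr)
    assume "\<not> F2 > 0" then have "F2 = 0" using F1nn by simp
    then show False using ge yy by simp
  qed
  show "eeF \<theta> z0 w > 0" unfolding e1 using F1p yp by simp
  show "ee2F \<theta> z0 w > 0" unfolding e2 using F2p yp by simp
  have "4 * eeF \<theta> z0 w * ee2F \<theta> z0 w = (F1 * F2) / (y*y0)^2"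
    unfolding e1 e2 using yp by (simp add: field_simps power2_eq_square)
  then show "4 * eeF \<theta> z0 w * ee2F \<theta> z0 w \<ge> 1" using ge yy by simp
qed

definition wstar :: "real \<Rightarrow> complex \<Rightarrow> real \<Rightarrow> complex" where
  "wstar \<theta> z0 es = Complex (Re z0 + Im z0 * (2*es* sin (\<theta>/2)*cos (\<theta>/2) - sin (\<theta>/2)*cos (\<theta>/2)/(2*es)))
      (Im z0 * (2*es*(sin (\<theta>/2))^2 + (cos (\<theta>/2))^2/(2*es)))"

lemma wstar_props:
  fixes \<theta> es :: real and z0 :: complex
  assumes z0: "Im z0 > 0" and es: "es > 0"
  shows "Im (wstar \<theta> z0 es) > 0" "eeF \<theta> z0 (wstar \<theta> z0 es) = es" "ee2F \<theta> z0 (wstar \<theta> z0 es) = 1/(4*es)"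
proof -
  define x0 where "x0 = Re z0"
  define y0 where "y0 = Im z0"
  define hc where "hc = cos (\<theta>/2)"
  define hs where "hs = sin (\<theta>/2)"
  have cs1: "hc^2 + hs^2 = 1" unfolding hc_def hs_def by simp
  define K where "K = 4*es^2*hs^2 + hc^2"
  have Kp: "K > 0"
  proof (cases "hc = 0")
    case True then have "hs^2 = 1" using cs1 by simp
    then show ?thesis unfolding K_def using True es by simp
  next
    case False then have "hc^2 > 0" by simp
    then show ?thesis unfolding K_def by (simp add: add_nonneg_pos)
  qed
  define xs where "xs = x0 + y0 * (2*es*hs*hc - hs*hc/(2*es))"
  define ys where "ys = y0 * (2*es*hs^2 + hc^2/(2*es))"
  have W: "wstar \<theta> z0 es = Complex xs ys" unfolding wstar_def xs_def ys_def x0_def y0_def hs_def hc_def ..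
  have ysK: "ys = y0 * K / (2*es)" unfolding ys_def K_def using es by (simp add: field_simps power2_eq_square)
  have y0p: "y0 > 0" using z0 unfolding y0_def .
  show "Im (wstar \<theta> z0 es) > 0" unfolding W using ysK y0p Kp es by simp
  have xi: "(xs - x0)*hc + ys*hs = 2*es*hs*y0"
  proof -
    have "(xs - x0)*hc + ys*hs = y0*(2*es*hs*(hc^2+hs^2))"
      unfolding xs_def ys_def using es by (simp add: field_simps power2_eq_square)
    then show ?thesis using cs1 by simp
  qed
  have ze: "- (xs - x0)*hs + ys*hc = y0*hc/(2*es)"
  proof -
    have "- (xs - x0)*hs + ys*hc = y0*hc*(hc^2+hs^2)/(2*es)"
      unfolding xs_def ys_def using es by (simp add: field_simps power2_eq_square)
    then show ?thesis using cs1 by simp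
  qed
  have "eeF \<theta> z0 (wstar \<theta> z0 es) = ((2*es*hs*y0)^2 + hc^2*y0^2) / (2*ys*y0)"
    unfolding eeF_def xiF_def W using xi unfolding x0_def y0_def hc_def hs_def by simp
  also have "\<dots> = es"
  proof -
    have num: "(2*es*hs*y0)^2 + hc^2*y0^2 = y0^2*K" unfolding K_def by (simp add: power2_eq_square algebra_simps)
    have den: "2*ys*y0 = y0^2*K/es" unfolding ysK using es by (simp add: field_simps power2_eq_square)
    have nz: "y0^2*K \<noteq> 0" using y0p Kp by simp
    show ?thesis unfolding num den using nz es by simp
  qed
  finally show "eeF \<theta> z0 (wstar \<theta> z0 es) = es" .
  have "ee2F \<theta> z0 (wstar \<theta> z0 es) = ((y0*hc/(2*es))^2 + hs^2*y0^2) / (2*ys*y0)"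
    unfolding ee2F_def zeF_def W using ze unfolding x0_def y0_def hc_def hs_def by simp
  also have "\<dots> = 1/(4*es)"
  proof -
    have num: "(y0*hc/(2*es))^2 + hs^2*y0^2 = y0^2*K/(4*es^2)" unfolding K_def using es by (simp add: power2_eq_square field_simps)
    have den: "2*ys*y0 = y0^2*K/es" unfolding ysK using es by (simp add: field_simps power2_eq_square)
    have nz: "y0^2*K \<noteq> 0" using y0p Kp by simp
    show ?thesis unfolding num den using nz es by (simp add: field_simps power2_eq_square)
  qed
  finally show "ee2F \<theta> z0 (wstar \<theta> z0 es) = 1/(4*es)" .
qed

lemma ee_unique:
  fixes \<theta> es :: real and z0 w :: complex
  assumes z0: "Im z0 > 0" and w: "Im w > 0" and es: "es > 0"
    and h1: "eeF \<theta> z0 w = es" and h2: "4 * eeF \<theta> z0 w * ee2F \<theta> z0 w = 1"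
  shows "w = wstar \<theta> z0 es"
proof -
  define x where "x = Re w"
  define y where "y = Im w"
  define x0 where "x0 = Re z0"
  define y0 where "y0 = Im z0"
  define hc where "hc = cos (\<theta>/2)"
  define hs where "hs = sin (\<theta>/2)"
  have yp: "y > 0" "y0 > 0" using w z0 unfolding y_def y0_def by auto
  have cs1: "hc^2 + hs^2 = 1" unfolding hc_def hs_def by simp
  define xi where "xi = (x - x0)*hc + y*hs"
  define ze where "ze = - (x - x0)*hs + y*hc"
  define F1 where "F1 = xi^2 + hc^2*y0^2"
  define F2 where "F2 = ze^2 + hs^2*y0^2"
  have e1: "eeF \<theta> z0 w = F1 / (2*y*y0)" unfolding eeF_def F1_def xi_def xiF_def x_def y_def x0_def y0_def hc_def hs_def by simp
  have e2: "ee2F \<theta> z0 w = F2 / (2*y*y0)" unfolding ee2F_def F2_def ze_def zeF_def x_def y_def x0_def y0_def hc_def hs_def by simp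
  have F1e: "F1 = 2*es*y*y0" using h1 yp unfolding e1 by (simp add: field_simps)
  have F12: "4*es*F2 = 2*y*y0"
  proof -
    have "4 * es * (F2/(2*y*y0)) = 1" using h2[unfolded h1 e2] .
    then show ?thesis using yp es by (simp add: field_simps)
  qed
  have rot: "hs*xi + hc*ze = y" unfolding xi_def ze_def using cs1 by algebra
  have sq0: "(xi - 2*es*hs*y0)^2 + (hc*y0 - 2*es*ze)^2 = F1 - 4*es*y0*(hs*xi + hc*ze) + es*(4*es*F2)"
    unfolding F1_def F2_def by (simp add: power2_eq_square algebra_simps)
  have "(xi - 2*es*hs*y0)^2 + (hc*y0 - 2*es*ze)^2 = 0"
    unfolding sq0 rot F1e F12 by (simp add: algebra_simps)
  then have a1: "xi = 2*es*hs*y0" and a2: "hc*y0 = 2*es*ze"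
    by (simp_all add: sum_power2_eq_zero_iff)
  have a3: "ze = hc*y0/(2*es)" using a2 es by (simp add: field_simps)
  have xr: "x - x0 = hc*xi - hs*ze" unfolding xi_def ze_def using cs1 by algebra
  have yr: "y = hs*xi + hc*ze" using rot by simp
  have "x = x0 + y0 * (2*es*hs*hc - hs*hc/(2*es))"
    using xr unfolding a1 a3 using es by (simp add: field_simps)
  moreover have "y = y0 * (2*es*hs^2 + hc^2/(2*es))"
    using yr unfolding a1 a3 using es by (simp add: field_simps power2_eq_square)
  ultimately show ?thesis unfolding wstar_def complex_eq_iff x_def y_def x0_def y0_def hc_def hs_def
    by simp
qed


lemma Phi_global:
  fixes t C es e e' :: real
  assumes t: "0 < t" "t < 1" and C: "C > t" and es: "es > 0"
    and esmax: "\<forall>E>0. E \<noteq> es \<longrightarrow> psi t C E < psi t C es"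
    and e: "e > 0" "e' > 0" "4*e*e' \<ge> 1"
  shows "Phi t C e e' \<le> psi t C es \<and> (Phi t C e e' = psi t C es \<longrightarrow> 4*e*e' = 1 \<and> e = es)"
proof -
  obtain E where E: "E > 0" "Phi t C e e' \<le> psi t C E" "4*e*e' > 1 \<longrightarrow> Phi t C e e' < psi t C E"
    using Phi_boundary[OF t C e] by blast
  have pE: "psi t C E \<le> psi t C es" using esmax E(1) by (cases "E = es") (auto intro: less_imp_le)
  show ?thesis
  proof (intro conjI impI)
    show "Phi t C e e' \<le> psi t C es" using E(2) pE by linarith
  next
    assume eq: "Phi t C e e' = psi t C es"
    show "4*e*e' = 1"
    proof (rule ccontr)
      assume "4*e*e' \<noteq> 1" then have "4*e*e' > 1" using e(3) by simp
      then have "Phi t C e e' < psi t C E" using E(3) by simp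
      then show False using eq pE by linarith
    qed
    then have e'eq: "e' = 1/(4*e)" using e by (simp add: field_simps)
    have "Phi t C e e' = psi t C e" unfolding e'eq using Phi_psi[OF t e(1)] by simp
    show "e = es"
    proof (rule ccontr)
      assume "e \<noteq> es"
      then have "psi t C e < psi t C es" using esmax e(1) by simp
      then show False using eq \<open>Phi t C e e' = psi t C e\<close> by simp
    qed
  qed
qed

lemma kap_pos:
  assumes "0 < t" "t < 1"
  shows "kap t \<theta> > 0"
proof -
  define hc where "hc = cos (\<theta>/2)"
  define hs where "hs = sin (\<theta>/2)"
  have cs1: "hc^2 + hs^2 = 1" unfolding hc_def hs_def by simp
  have p: "(1-t)^2*hc^2 + hs^2 > 0" and q: "(1+t)^2*hc^2 + hs^2 > 0"
  proof -
    show "(1-t)^2*hc^2 + hs^2 > 0"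
    proof (cases "hc = 0")
      case True then have "hs^2 = 1" using cs1 by simp
      then show ?thesis using True by simp
    next
      case False then have "(1-t)^2*hc^2 > 0" using assms by simp
      then show ?thesis by (simp add: add_pos_nonneg)
    qed
    show "(1+t)^2*hc^2 + hs^2 > 0"
    proof (cases "hc = 0")
      case True then have "hs^2 = 1" using cs1 by simp
      then show ?thesis using True by simp
    next
      case False then have "(1+t)^2*hc^2 > 0" using assms by simp
      then show ?thesis by (simp add: add_pos_nonneg)
    qed
  qed
  show ?thesis unfolding kap_def hc_def[symmetric] hs_def[symmetric] using p q by simp
qed

lemma c_eta_gt:
  assumes "0 < \<eta>" "\<eta> < 1"
  shows "c_eta \<eta> > 1"
proof -
  have a: "4*\<eta> - \<eta>^3 > 0"
  proof -
    have h: "\<eta>*\<eta> \<le> \<eta>" using mult_left_le[of \<eta> \<eta>] assms by simp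
    have "\<eta>^2 < 4" unfolding power2_eq_square using h assms by linarith
    then have "\<eta> * \<eta>^2 < \<eta> * 4" using assms by simp
    then show ?thesis by (simp add: power3_eq_cube power2_eq_square)
  qed
  have b: "4*\<eta> - \<eta>^3 < 4"
  proof -
    have "\<eta>^3 > 0" using assms by simp
    then show ?thesis using assms by linarith
  qed
  show ?thesis unfolding c_eta_def using a b by simp
qed

theorem lemma3:
  fixes t :: real
  assumes "0 < t" and "t < 1"
  shows "\<forall>\<^sub>F \<eta> in nhds t. \<forall>\<theta>::real. \<forall>z \<in> upper_half.
           \<exists>!P. P \<in> Sigma_set t \<theta> \<and>
                (\<forall>Q \<in> Sigma_set t \<theta>. norm (K_eta \<eta> z Q) \<le> norm (K_eta \<eta> z P))"
proof -
  have ev: "eventually (\<lambda>\<eta>. \<eta> \<in> {0<..<1}) (nhds t)"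
    using eventually_nhds_in_open[of "{0<..<1::real}" t] assms by auto
  show ?thesis
  proof (rule eventually_mono[OF ev])
    fix \<eta> :: real assume "\<eta> \<in> {0<..<1}"
    then have eta: "0 < \<eta>" "\<eta> < 1" by auto
    define C where "C = c_eta \<eta>"
    have C1: "C > 1" unfolding C_def using c_eta_gt[OF eta] .
    have Ct: "C > t" using C1 assms by simp
    obtain es where es: "es > 0" and esmax: "\<forall>E>0. E \<noteq> es \<longrightarrow> psi t C E < psi t C es"
      using psi_max[OF assms, of C] C1 by auto
    show "\<forall>\<theta>::real. \<forall>z \<in> upper_half.
           \<exists>!P. P \<in> Sigma_set t \<theta> \<and>
                (\<forall>Q \<in> Sigma_set t \<theta>. norm (K_eta \<eta> z Q) \<le> norm (K_eta \<eta> z P))"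
    proof (intro allI ballI)
      fix \<theta> :: real and z0 :: complex assume "z0 \<in> upper_half"
      then have z0: "Im z0 > 0" unfolding upper_half_def by simp
      define ws where "ws = wstar \<theta> z0 es"
      define Ps where "Ps = horo (- \<i> * of_real t) ws \<theta>"
      have wsp: "Im ws > 0" unfolding ws_def using wstar_props(1)[OF z0 es] .
      have kp: "kap t \<theta> > 0" using kap_pos[OF assms] .
      have valPs: "norm (K_eta \<eta> z0 Ps) = kap t \<theta> * exp (psi t C es)"
      proof -
        have "norm (K_eta \<eta> z0 Ps) = kap t \<theta> * exp (Phi t C (eeF \<theta> z0 ws) (ee2F \<theta> z0 ws))"
          unfolding Ps_def C_def using K_formula[OF assms z0 wsp] .
        also have "Phi t C (eeF \<theta> z0 ws) (ee2F \<theta> z0 ws) = psi t C es"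
          unfolding ws_def wstar_props(2,3)[OF z0 es] using Phi_psi[OF assms es] by simp
        finally show ?thesis .
      qed
      have key: "\<And>w. Im w > 0 \<Longrightarrow> norm (K_eta \<eta> z0 (horo (- \<i> * of_real t) w \<theta>)) \<le> norm (K_eta \<eta> z0 Ps)
                 \<and> (norm (K_eta \<eta> z0 (horo (- \<i> * of_real t) w \<theta>)) = norm (K_eta \<eta> z0 Ps) \<longrightarrow> w = ws)"
      proof -
        fix w :: complex assume w: "Im w > 0"
        have val: "norm (K_eta \<eta> z0 (horo (- \<i> * of_real t) w \<theta>)) = kap t \<theta> * exp (Phi t C (eeF \<theta> z0 w) (ee2F \<theta> z0 w))"
          unfolding C_def using K_formula[OF assms z0 w] .
        have G: "Phi t C (eeF \<theta> z0 w) (ee2F \<theta> z0 w) \<le> psi t C es \<and>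
              (Phi t C (eeF \<theta> z0 w) (ee2F \<theta> z0 w) = psi t C es \<longrightarrow>
                 4 * eeF \<theta> z0 w * ee2F \<theta> z0 w = 1 \<and> eeF \<theta> z0 w = es)"
          using Phi_global[OF assms Ct es esmax ee_props[OF z0 w]] .
        show "norm (K_eta \<eta> z0 (horo (- \<i> * of_real t) w \<theta>)) \<le> norm (K_eta \<eta> z0 Ps)
                 \<and> (norm (K_eta \<eta> z0 (horo (- \<i> * of_real t) w \<theta>)) = norm (K_eta \<eta> z0 Ps) \<longrightarrow> w = ws)"
        proof (intro conjI impI)
          show "norm (K_eta \<eta> z0 (horo (- \<i> * of_real t) w \<theta>)) \<le> norm (K_eta \<eta> z0 Ps)"
            unfolding val valPs using G kp by simp
        next
          assume "norm (K_eta \<eta> z0 (horo (- \<i> * of_real t) w \<theta>)) = norm (K_eta \<eta> z0 Ps)"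
          then have "exp (Phi t C (eeF \<theta> z0 w) (ee2F \<theta> z0 w)) = exp (psi t C es)"
            unfolding val valPs using kp by simp
          then have "Phi t C (eeF \<theta> z0 w) (ee2F \<theta> z0 w) = psi t C es" by simp
          then have "4 * eeF \<theta> z0 w * ee2F \<theta> z0 w = 1 \<and> eeF \<theta> z0 w = es" using G by blast
          then show "w = ws" unfolding ws_def using ee_unique[OF z0 w es] by blast
        qed
      qed
      have PsS: "Ps \<in> Sigma_set t \<theta>" unfolding Sigma_set_def Ps_def upper_half_def using wsp by auto
      show "\<exists>!P. P \<in> Sigma_set t \<theta> \<and>
                (\<forall>Q \<in> Sigma_set t \<theta>. norm (K_eta \<eta> z0 Q) \<le> norm (K_eta \<eta> z0 P))"
      proof (rule ex1I[of _ Ps])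
        show "Ps \<in> Sigma_set t \<theta> \<and> (\<forall>Q \<in> Sigma_set t \<theta>. norm (K_eta \<eta> z0 Q) \<le> norm (K_eta \<eta> z0 Ps))"
        proof (intro conjI ballI PsS)
          fix Q assume "Q \<in> Sigma_set t \<theta>"
          then obtain w where w: "Im w > 0" and Q: "Q = horo (- \<i> * of_real t) w \<theta>"
            unfolding Sigma_set_def upper_half_def by auto
          show "norm (K_eta \<eta> z0 Q) \<le> norm (K_eta \<eta> z0 Ps)" unfolding Q using key[OF w] by simp
        qed
      next
        fix P assume P: "P \<in> Sigma_set t \<theta> \<and> (\<forall>Q \<in> Sigma_set t \<theta>. norm (K_eta \<eta> z0 Q) \<le> norm (K_eta \<eta> z0 P))"
        then obtain w where w: "Im w > 0" and Pw: "P = horo (- \<i> * of_real t) w \<theta>"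
          unfolding Sigma_set_def upper_half_def by auto
        have "norm (K_eta \<eta> z0 Ps) \<le> norm (K_eta \<eta> z0 P)" using P PsS by blast
        moreover have "norm (K_eta \<eta> z0 P) \<le> norm (K_eta \<eta> z0 Ps)" unfolding Pw using key[OF w] by simp
        ultimately have "norm (K_eta \<eta> z0 P) = norm (K_eta \<eta> z0 Ps)" by simp
        then have "w = ws" unfolding Pw using key[OF w] by simp
        then show "P = Ps" unfolding Pw Ps_def by simp
      qed
    qed
  qed
qed

end
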